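(* Let $S$ be a finite set of at least two points in $\mathbb R^2$, let $\square$ be a minimal bounding square of $S$, and let $\mathrm{lfs}(x,y)$ denote the Euclidean distance from $(x,y)$ to the second nearest point of $S$. Then for every hierarchical clustering of $S$, the sum over its clusters of the perimeters of their convex hulls is at least $c\int_{\square} \frac{1}{\mathrm{lfs}(x,y)}\,dx\,dy$, for an absolute constant $c>0$.
   Context: A hierarchical clustering of a finite point set $S$ is a family of nonempty subsets of $S$ (clusters) containing $S$ and all singletons, any two of which are disjoint or nested, maximal with this property (equivalently a rooted binary tree whose leaves are the points). *)

theory Defs
  imports "HOL-Analysis.Analysis"
begin

type_synonym pt = "real ^ 2"

definition laminar :: "'a set set \<Rightarrow> bool" where
  "laminar H \<longleftrightarrow> (\<forall>A\<in>H. \<forall>B\<in>H. A \<inter> B = {} \<or> A \<subseteq> B \<or> B \<subseteq> A)"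

definition cluster_family :: "'a set \<Rightarrow> 'a set set \<Rightarrow> bool" where
  "cluster_family S H \<longleftrightarrow> (\<forall>C\<in>H. C \<noteq> {} \<and> C \<subseteq> S) \<and> S \<in> H \<and>
     (\<forall>x\<in>S. {x} \<in> H) \<and> laminar H"

definition hierarchical_clustering :: "'a set \<Rightarrow> 'a set set \<Rightarrow> bool" where
  "hierarchical_clustering S H \<longleftrightarrow> cluster_family S H \<and>
     (\<forall>H'. cluster_family S H' \<and> H \<subseteq> H' \<longrightarrow> H' = H)"

text \<open>Orientation test: nonnegative iff c lies to the left of or on the directed line a->b.\<close>
definition cross :: "pt \<Rightarrow> pt \<Rightarrow> pt \<Rightarrow> real" where
  "cross a b c = (b$1 - a$1) * (c$2 - a$2) - (b$2 - a$2) * (c$1 - a$1)"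

definition ccw_hull_list :: "pt set \<Rightarrow> pt list \<Rightarrow> bool" where
  "ccw_hull_list C vs \<longleftrightarrow> distinct vs \<and>
     set vs = {x. x extreme_point_of (convex hull C)} \<and>
     (\<forall>i<length vs. \<forall>p\<in>C. cross (vs ! i) (vs ! ((i + 1) mod length vs)) p \<ge> 0)"

definition cyclic_length :: "pt list \<Rightarrow> real" where
  "cyclic_length vs = (\<Sum>i<length vs. dist (vs ! i) (vs ! ((i + 1) mod length vs)))"

text \<open>Perimeter of the convex hull of a finite point set (a degenerate segment hull
  has perimeter twice its length, a point has perimeter 0).\<close>
definition hull_perimeter :: "pt set \<Rightarrow> real" where
  "hull_perimeter C = (SOME l. \<exists>vs. ccw_hull_list C vs \<and> l = cyclic_length vs)"

text \<open>Distance from p to the second nearest point of S.\<close>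
definition lfs :: "pt set \<Rightarrow> pt \<Rightarrow> real" where
  "lfs S p = Min {max (dist p q) (dist p q') | q q'. q \<in> S \<and> q' \<in> S \<and> q \<noteq> q'}"

definition min_bounding_square :: "pt set \<Rightarrow> pt set \<Rightarrow> bool" where
  "min_bounding_square S Q \<longleftrightarrow> (\<exists>a s. s \<ge> 0 \<and> Q = cbox a (a + (\<chi> i. s)) \<and> S \<subseteq> Q \<and>
     (\<forall>a' s'. s' \<ge> 0 \<and> S \<subseteq> cbox a' (a' + (\<chi> i. s')) \<longrightarrow> s \<le> s'))"

end

theory Submission
  imports Defs
begin



lemma cross_cyc: "cross a b c = cross b c a"
  unfolding cross_def by (simp add: algebra_simps)

lemma cross_swap: "cross a c b = - cross a b c"
  unfolding cross_def by (simp add: algebra_simps)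

lemma cross_same1 [simp]: "cross a a c = 0" and cross_same2 [simp]: "cross a b a = 0"
  and cross_same3 [simp]: "cross a b b = 0"
  unfolding cross_def by (simp_all add: algebra_simps)

lemma convex_halfplane_cross: "convex {p. cross a b p \<ge> 0}"
proof (rule convexI)
  fix x y :: pt and u v :: real
  assume "x \<in> {p. cross a b p \<ge> 0}" "y \<in> {p. cross a b p \<ge> 0}" "0 \<le> u" "0 \<le> v" "u + v = 1"
  moreover have "cross a b (u *\<^sub>R x + v *\<^sub>R y) = u * cross a b x + v * cross a b y"
  proof -
    have v: "v = 1 - u" using \<open>u + v = 1\<close> by simp
    show ?thesis unfolding cross_def v by (simp add: algebra_simps)
  qed
  ultimately show "u *\<^sub>R x + v *\<^sub>R y \<in> {p. cross a b p \<ge> 0}" by simp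
qed

lemma triangle_in_hull:
  assumes D: "cross a b c > 0" and "cross a b x \<ge> 0" "cross b c x \<ge> 0" "cross c a x \<ge> 0"
  shows "x \<in> convex hull {a, b, c}"
proof -
  define D where "D = cross a b c"
  have sum: "cross b c x + cross c a x + cross a b x = D"
    unfolding D_def cross_def by (simp add: algebra_simps)
  have eq: "x = (cross b c x / D) *\<^sub>R a + (cross c a x / D) *\<^sub>R b + (cross a b x / D) *\<^sub>R c"
  proof -
    have "D *\<^sub>R x = cross b c x *\<^sub>R a + cross c a x *\<^sub>R b + cross a b x *\<^sub>R c"
      unfolding D_def cross_def vec_eq_iff forall_2 by (simp add: algebra_simps)
    then have "(1/D) *\<^sub>R (D *\<^sub>R x) = (1/D) *\<^sub>R (cross b c x *\<^sub>R a + cross c a x *\<^sub>R b + cross a b x *\<^sub>R c)"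
      by simp
    moreover have "D \<noteq> 0" using D D_def by simp
    ultimately show ?thesis by (simp add: scaleR_add_right)
  qed
  show ?thesis unfolding convex_hull_3
    apply (rule CollectI, rule exI[of _ "cross b c x / D"], rule exI[of _ "cross c a x / D"], rule exI[of _ "cross a b x / D"])
  proof (intro conjI)
    show "0 \<le> cross b c x / D" "0 \<le> cross c a x / D" "0 \<le> cross a b x / D"
      using assms D_def by auto
    have "D \<noteq> 0" using D D_def by simp
    then show "cross b c x / D + cross c a x / D + cross a b x / D = 1"
      using sum by (simp add: add_divide_distrib[symmetric])
  qed (rule eq)
qed

lemma sorted_exists:
  assumes "finite A" and tr: "\<And>x y z. x \<in> A \<Longrightarrow> y \<in> A \<Longrightarrow> z \<in> A \<Longrightarrow> R x y \<Longrightarrow> R y z \<Longrightarrow> R x z"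
    and tot: "\<And>x y. x \<in> A \<Longrightarrow> y \<in> A \<Longrightarrow> x \<noteq> y \<Longrightarrow> R x y \<or> R y x"
    and irr: "\<And>x. x \<in> A \<Longrightarrow> \<not> R x x"
  shows "\<exists>xs. distinct xs \<and> set xs = A \<and> sorted_wrt R xs"
  using assms
proof (induction A rule: finite_induct)
  case empty
  then show ?case by auto
next
  case (insert x F)
  have "\<exists>xs. distinct xs \<and> set xs = F \<and> sorted_wrt R xs"
  proof (rule insert.IH)
    show "\<And>a b c. a \<in> F \<Longrightarrow> b \<in> F \<Longrightarrow> c \<in> F \<Longrightarrow> R a b \<Longrightarrow> R b c \<Longrightarrow> R a c"
      using insert.prems(1) by blast
    show "\<And>a b. a \<in> F \<Longrightarrow> b \<in> F \<Longrightarrow> a \<noteq> b \<Longrightarrow> R a b \<or> R b a"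
      using insert.prems(2) by blast
    show "\<And>a. a \<in> F \<Longrightarrow> \<not> R a a"
      using insert.prems(3) by blast
  qed
  then obtain xs where xs: "distinct xs" "set xs = F" "sorted_wrt R xs" by blast
  have xF: "x \<notin> F" by fact
  have trI: "\<And>a b c. a \<in> insert x F \<Longrightarrow> b \<in> insert x F \<Longrightarrow> c \<in> insert x F \<Longrightarrow> R a b \<Longrightarrow> R b c \<Longrightarrow> R a c"
    using insert.prems(1) by blast
  have totI: "\<And>y. y \<in> F \<Longrightarrow> R y x \<or> R x y"
    using insert.prems(2) xF by (metis insertCI)
  have irrI: "\<And>y. y \<in> insert x F \<Longrightarrow> \<not> R y y" using insert.prems(3) by blast
  define ys where "ys = filter (\<lambda>y. R y x) xs @ x # filter (\<lambda>y. R x y) xs"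
  have "set ys = insert x F"
  proof
    show "set ys \<subseteq> insert x F" unfolding ys_def using xs by auto
    show "insert x F \<subseteq> set ys" unfolding ys_def using xs totI by auto
  qed
  moreover have "distinct ys"
  proof -
    have "\<And>y. y \<in> F \<Longrightarrow> R y x \<Longrightarrow> R x y \<Longrightarrow> False"
      using trI irrI by (metis insertCI)
    then show ?thesis unfolding ys_def using xs xF by (auto simp: distinct_filter)
  qed
  moreover have "sorted_wrt R ys"
  proof -
    have "\<forall>y\<in>F. \<forall>z\<in>F. R y x \<longrightarrow> R x z \<longrightarrow> R y z"
      using trI by blast
    then have c: "\<forall>y\<in>set (filter (\<lambda>y. R y x) xs). \<forall>z\<in>set (x # filter (\<lambda>y. R x y) xs). R y z"
      using xs(2) by auto
    have a: "sorted_wrt R (filter (\<lambda>y. R y x) xs)" using xs(3) by (rule sorted_wrt_filter)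
    have b: "sorted_wrt R (x # filter (\<lambda>y. R x y) xs)"
      using sorted_wrt_filter[OF xs(3)] by simp
    show ?thesis unfolding ys_def sorted_wrt_append using a b c by blast
  qed
  ultimately show ?case by blast
qed



lemma trans_alg:
  fixes u1 u2 v1 v2 w1 w2 :: real
  assumes "0 < u2 \<or> (u2 = 0 \<and> 0 < u1)" "0 < v2 \<or> (v2 = 0 \<and> 0 < v1)" "0 < w2 \<or> (w2 = 0 \<and> 0 < w1)"
    "u1 * v2 - u2 * v1 > 0" "v1 * w2 - v2 * w1 > 0"
  shows "u1 * w2 - u2 * w1 > 0"
proof -
  have id: "(u1 * v2 - u2 * v1) * w2 + (v1 * w2 - v2 * w1) * u2 + (w1 * u2 - w2 * u1) * v2 = 0"
    by (simp add: algebra_simps)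
  show ?thesis
  proof (rule ccontr)
    assume c: "\<not> ?thesis"
    then have "w1 * u2 - w2 * u1 \<ge> 0" by (simp add: mult.commute)
    have "(u1 * v2 - u2 * v1) * w2 \<ge> 0" using assms by (auto intro!: mult_nonneg_nonneg)
    moreover have "(v1 * w2 - v2 * w1) * u2 \<ge> 0" using assms by (auto intro!: mult_nonneg_nonneg)
    moreover have "(w1 * u2 - w2 * u1) * v2 \<ge> 0" using assms \<open>w1 * u2 - w2 * u1 \<ge> 0\<close> by (auto intro!: mult_nonneg_nonneg)
    ultimately have z: "(u1 * v2 - u2 * v1) * w2 = 0" "(v1 * w2 - v2 * w1) * u2 = 0" using id by linarith+
    then have "w2 = 0" "u2 = 0" using assms by auto
    then show False using assms by (auto simp: zero_less_mult_iff mult_less_0_iff)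
  qed
qed

lemma coll_alg:
  fixes u1 u2 v1 v2 :: real
  assumes "0 < u2 \<or> (u2 = 0 \<and> 0 < u1)" "0 < v2 \<or> (v2 = 0 \<and> 0 < v1)"
    "u1 * v2 - u2 * v1 = 0"
  shows "\<exists>t>0. v1 = t * u1 \<and> v2 = t * u2"
proof (cases "u2 = 0")
  case True
  then have "u1 > 0" using assms by auto
  then have "v2 = 0" using assms True by simp
  then show ?thesis using assms True \<open>u1 > 0\<close> by (intro exI[of _ "v1/u1"]) auto
next
  case False
  then have "u2 > 0" using assms by auto
  have v1: "v1 = (v2/u2) * u1" using assms(3) \<open>u2 > 0\<close> by (simp add: field_simps)
  have "v2 > 0"
  proof (rule ccontr)
    assume "\<not> v2 > 0" then have "v2 = 0" "v1 > 0" using assms by auto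
    then show False using v1 by simp
  qed
  then show ?thesis using v1 \<open>u2 > 0\<close> by (intro exI[of _ "v2/u2"]) auto
qed



definition up :: "pt \<Rightarrow> pt \<Rightarrow> bool" where
  "up e f \<longleftrightarrow> e$2 < f$2 \<or> (e$2 = f$2 \<and> e$1 < f$1)"

lemma cross_trans:
  assumes "up e f" "up e g" "up e h" "cross e f g > 0" "cross e g h > 0"
  shows "cross e f h > 0"
  using trans_alg[of "f$2 - e$2" "f$1 - e$1" "g$2 - e$2" "g$1 - e$1" "h$2 - e$2" "h$1 - e$1"] assms
  unfolding up_def cross_def by (auto simp: algebra_simps)

lemma cross_coll:
  assumes "up e f" "up e g" "cross e f g = 0"
  shows "\<exists>t>0. g = e + t *\<^sub>R (f - e)"
proof -
  obtain t where t: "t > 0" "g$1 - e$1 = t * (f$1 - e$1)" "g$2 - e$2 = t * (f$2 - e$2)"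
    using coll_alg[of "f$2 - e$2" "f$1 - e$1" "g$2 - e$2" "g$1 - e$1"] assms
    unfolding up_def cross_def by (auto simp: algebra_simps)
  then have "g = e + t *\<^sub>R (f - e)"
    unfolding vec_eq_iff forall_2 by (simp add: algebra_simps)
  then show ?thesis using t by blast
qed

lemma ext_in_sub_hull:
  assumes "x extreme_point_of (convex hull C)" "F \<subseteq> C" "x \<in> convex hull F"
  shows "x \<in> F"
proof -
  have sub: "convex hull F \<subseteq> convex hull C" by (rule hull_mono) fact
  have "x extreme_point_of (convex hull F)"
    using assms(1) assms(3) sub unfolding extreme_point_of_def by blast
  then show ?thesis by (rule extreme_point_of_convex_hull)
qed

lemma ccw_hull_exists:
  assumes fin: "finite C" and ne: "C \<noteq> {}"
  shows "\<exists>vs. ccw_hull_list C vs"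
proof -
  define E where "E = {x. x extreme_point_of (convex hull C)}"
  have EC: "E \<subseteq> C" unfolding E_def using extreme_point_of_convex_hull by auto
  have finE: "finite E" using EC fin finite_subset by blast
  have hullE: "convex hull C = convex hull E"
  proof -
    have "compact (convex hull C)" using fin by (simp add: compact_convex_hull finite_imp_compact)
    then have "convex hull C = convex hull E"
      unfolding E_def by (rule Krein_Milman_Minkowski) (simp add: convex_convex_hull)
    then show ?thesis by simp
  qed
  have neE: "E \<noteq> {}" using hullE ne hull_subset[of C convex] by auto
  have extE: "\<And>x F. x \<in> E \<Longrightarrow> F \<subseteq> E \<Longrightarrow> x \<in> convex hull F \<Longrightarrow> x \<in> F"
    using ext_in_sub_hull EC unfolding E_def by blast
  define m2 where "m2 = Min ((\<lambda>f. f$2) ` E)"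
  define E2 where "E2 = {f \<in> E. f$2 = m2}"
  have "m2 \<in> (\<lambda>f. f$2) ` E" unfolding m2_def using finE neE by simp
  then have neE2: "E2 \<noteq> {}" unfolding E2_def by auto
  have finE2: "finite E2" unfolding E2_def using finE by simp
  define m1 where "m1 = Min ((\<lambda>f. f$1) ` E2)"
  have "m1 \<in> (\<lambda>f. f$1) ` E2" unfolding m1_def using finE2 neE2 by simp
  then obtain e0 where e0: "e0 \<in> E2" "e0$1 = m1" by auto
  have e0E: "e0 \<in> E" using e0 E2_def by auto
  have upA: "up e0 f" if "f \<in> E" "f \<noteq> e0" for f
  proof -
    have "m2 \<le> f$2" unfolding m2_def using finE that by simp
    moreover have "e0$2 = m2" using e0 E2_def by simp
    moreover have "f$2 = m2 \<Longrightarrow> m1 \<le> f$1" unfolding m1_def using finE2 that E2_def by simp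
    moreover have "f$2 = e0$2 \<Longrightarrow> f$1 = e0$1 \<Longrightarrow> f = e0" unfolding vec_eq_iff forall_2 by simp
    ultimately show ?thesis unfolding up_def using e0 that by force
  qed
  define A where "A = E - {e0}"
  define R where "R = (\<lambda>f g. cross e0 f g > 0)"
  have totA: "R f g \<or> R g f" if fg: "f \<in> A" "g \<in> A" "f \<noteq> g" for f g
  proof (rule ccontr)
    assume "\<not> (R f g \<or> R g f)"
    then have "cross e0 f g = 0" unfolding R_def using cross_swap[of e0 f g] by linarith
    then obtain t where t: "t > 0" "g = e0 + t *\<^sub>R (f - e0)"
      using cross_coll[of e0 f g] upA[of f] upA[of g] fg A_def by blast
    show False
    proof (cases "t \<le> 1")
      case True
      have "g = (1 - t) *\<^sub>R e0 + t *\<^sub>R f" using t by (simp add: algebra_simps)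
      then have "g \<in> closed_segment e0 f" using True t unfolding closed_segment_def by auto
      then have "g \<in> convex hull {e0, f}" by (simp add: segment_convex_hull)
      then have "g \<in> {e0, f}" using extE[of g "{e0,f}"] fg e0E A_def by auto
      then show False using fg A_def by auto
    next
      case False
      have "f = e0 + (1/t) *\<^sub>R (g - e0)" using t by simp
      then have "f = (1 - 1/t) *\<^sub>R e0 + (1/t) *\<^sub>R g" by (simp add: algebra_simps)
      then have "f \<in> closed_segment e0 g" using False t unfolding closed_segment_def by auto
      then have "f \<in> convex hull {e0, g}" by (simp add: segment_convex_hull)
      then have "f \<in> {e0, g}" using extE[of f "{e0,g}"] fg e0E A_def by auto
      then show False using fg A_def by auto
    qed
  qed
  have trA: "R f h" if "f \<in> A" "g \<in> A" "h \<in> A" "R f g" "R g h" for f g h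
    using cross_trans[of e0 f g h] that upA A_def R_def by auto
  have irrA: "\<not> R f f" for f unfolding R_def by simp
  obtain ys where ys: "distinct ys" "set ys = A" "sorted_wrt R ys"
    using sorted_exists[of A R] finE A_def trA totA irrA by blast
  define vs where "vs = e0 # ys"
  have ysR: "\<And>i j. i < j \<Longrightarrow> j < length ys \<Longrightarrow> R (ys!i) (ys!j)"
    using ys(3) sorted_wrt_iff_nth_less by blast
  have ysE: "\<And>i. i < length ys \<Longrightarrow> ys!i \<in> E \<and> ys!i \<noteq> e0"
    using ys(2) A_def nth_mem by blast
  have gE: "\<And>g. g \<in> E \<Longrightarrow> g = e0 \<or> (\<exists>j<length ys. g = ys!j)"
    using ys(2) A_def by (metis DiffI in_set_conv_nth singletonD)
  have edgesE: "\<forall>g\<in>E. cross (vs ! i) (vs ! ((i + 1) mod length vs)) g \<ge> 0" if i: "i < length vs" for i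
  proof
    fix g assume g: "g \<in> E"
    let ?n = "length ys"
    show "cross (vs ! i) (vs ! ((i + 1) mod length vs)) g \<ge> 0"
    proof (cases "?n = 0")
      case True
      then have "i = 0" using i vs_def by simp
      then show ?thesis using True vs_def by simp
    next
      case nz: False
      show ?thesis
      proof (cases "i = 0")
        case True
        then have eq: "vs ! i = e0" "vs ! ((i + 1) mod length vs) = ys ! 0"
          using nz vs_def by auto
        have "cross e0 (ys ! 0) g \<ge> 0"
          using gE[OF g]
        proof
          assume "g = e0" then show ?thesis by simp
        next
          assume "\<exists>j<?n. g = ys!j"
          then obtain j where j: "j < ?n" "g = ys!j" by blast
          show ?thesis
          proof (cases "j = 0")
            case True then show ?thesis using j by simp
          next
            case False then show ?thesis using ysR[of 0 j] j unfolding R_def by simp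
          qed
        qed
        then show ?thesis using eq by simp
      next
        case inz: False
        show ?thesis
        proof (cases "i = ?n")
          case True
          then have eq: "vs ! i = ys ! (?n - 1)" "vs ! ((i + 1) mod length vs) = e0"
            using nz vs_def by auto
          have "cross e0 g (ys ! (?n - 1)) \<ge> 0"
            using gE[OF g]
          proof
            assume "g = e0" then show ?thesis by simp
          next
            assume "\<exists>j<?n. g = ys!j"
            then obtain j where j: "j < ?n" "g = ys!j" by blast
            show ?thesis
            proof (cases "j = ?n - 1")
              case True then show ?thesis using j by simp
            next
              case False
              then have "j < ?n - 1" "?n - 1 < ?n" using j nz by auto
              then show ?thesis using ysR[of j "?n - 1"] j unfolding R_def by simp
            qed
          qed
          then show ?thesis using eq cross_cyc[of "ys ! (?n - 1)" e0 g] by simp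
        next
          case False
          define k where "k = i - 1"
          have k: "k + 1 < ?n" "i = k + 1" using False inz i vs_def k_def by auto
          have eq: "vs ! i = ys ! k" "vs ! ((i + 1) mod length vs) = ys ! (k + 1)"
            using k vs_def by auto
          let ?a = "ys ! k" and ?b = "ys ! (k + 1)"
          have aE: "?a \<in> E" "?a \<noteq> e0" and bE: "?b \<in> E" "?b \<noteq> e0" using ysE k by auto
          have Rab: "cross e0 ?a ?b > 0" using ysR[of k "k+1"] k R_def by simp
          have "cross ?a ?b g \<ge> 0"
            using gE[OF g]
          proof
            assume "g = e0" then show ?thesis using Rab cross_cyc[of e0 ?a ?b] by simp
          next
            assume "\<exists>j<?n. g = ys!j"
            then obtain j where j: "j < ?n" "g = ys!j" by blast
            have gE': "g \<in> E" "g \<noteq> e0" using ysE j by auto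
            consider "j = k" | "j = k + 1" | "j < k" | "j > k + 1" by linarith
            then show ?thesis
            proof cases
              case 1 then show ?thesis using j by simp
            next
              case 2 then show ?thesis using j by simp
            next
              case 3
              have Rga: "cross e0 g ?a > 0" using ysR[of j k] 3 j k R_def by simp
              have Rgb: "cross e0 g ?b > 0" using ysR[of j "k+1"] 3 j k R_def by simp
              have ga: "g \<noteq> ?a" using 3 j k ys(1) nth_eq_iff_index_eq by fastforce
              show ?thesis
              proof (rule ccontr)
                assume neg: "\<not> ?thesis"
                have "?a \<in> convex hull {e0, g, ?b}"
                proof (rule triangle_in_hull)
                  show "cross e0 g ?b > 0" by fact
                  show "cross e0 g ?a \<ge> 0" using Rga by simp
                  show "cross g ?b ?a \<ge> 0" using neg cross_swap[of g ?a ?b] cross_cyc[of ?a ?b g] cross_cyc[of ?b g ?a] by simp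
                  show "cross ?b e0 ?a \<ge> 0" using Rab cross_cyc[of e0 ?a ?b] cross_cyc[of ?a ?b e0] by simp
                qed
                then have "?a \<in> {e0, g, ?b}" using extE[of ?a "{e0, g, ?b}"] aE gE' bE e0E by auto
                moreover have "?a \<noteq> ?b" using ys(1) k nth_eq_iff_index_eq by fastforce
                ultimately show False using aE ga by auto
              qed
            next
              case 4
              have Rbg: "cross e0 ?b g > 0" using ysR[of "k+1" j] 4 j k R_def by simp
              have Rag: "cross e0 ?a g > 0" using ysR[of k j] 4 j k R_def by simp
              have gb: "g \<noteq> ?b" using 4 j k ys(1) nth_eq_iff_index_eq by fastforce
              show ?thesis
              proof (rule ccontr)
                assume neg: "\<not> ?thesis"
                have "?b \<in> convex hull {e0, ?a, g}"
                proof (rule triangle_in_hull)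
                  show "cross e0 ?a g > 0" by fact
                  show "cross e0 ?a ?b \<ge> 0" using Rab by simp
                  show "cross ?a g ?b \<ge> 0" using neg cross_swap[of ?a ?b g] by simp
                  show "cross g e0 ?b \<ge> 0" using Rbg cross_cyc[of e0 ?b g] cross_cyc[of ?b g e0] by simp
                qed
                then have "?b \<in> {e0, ?a, g}" using extE[of ?b "{e0, ?a, g}"] aE gE' bE e0E by auto
                moreover have "?a \<noteq> ?b" using ys(1) k nth_eq_iff_index_eq by fastforce
                ultimately show False using bE gb by auto
              qed
            qed
          qed
          then show ?thesis using eq by simp
        qed
      qed
    qed
  qed
  have "ccw_hull_list C vs"
    unfolding ccw_hull_list_def
  proof (intro conjI allI impI ballI)
    show "distinct vs" using ys A_def vs_def by auto
    show "set vs = {x. x extreme_point_of convex hull C}" using ys A_def vs_def e0E E_def by auto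
  next
    fix i p assume i: "i < length vs" and p: "p \<in> C"
    have "convex hull E \<subseteq> {p. cross (vs ! i) (vs ! ((i + 1) mod length vs)) p \<ge> 0}"
      by (rule hull_minimal) (use edgesE[OF i] convex_halfplane_cross in auto)
    moreover have "p \<in> convex hull E" using p hullE hull_subset[of C convex] by auto
    ultimately show "cross (vs ! i) (vs ! ((i + 1) mod length vs)) p \<ge> 0" by auto
  qed
  then show ?thesis by blast
qed




lemma hull_perimeter_ex:
  assumes "finite C" "C \<noteq> {}"
  shows "\<exists>vs. ccw_hull_list C vs \<and> hull_perimeter C = cyclic_length vs"
proof -
  have "\<exists>l. \<exists>vs. ccw_hull_list C vs \<and> l = cyclic_length vs"
    using ccw_hull_exists[OF assms] by blast
  then have "\<exists>vs. ccw_hull_list C vs \<and> hull_perimeter C = cyclic_length vs"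
    unfolding hull_perimeter_def by (rule someI_ex)
  then show ?thesis .
qed

lemma cyclic_length_nonneg: "cyclic_length vs \<ge> 0"
  unfolding cyclic_length_def by (auto intro: sum_nonneg)

lemma dist_le_path:
  assumes "i \<le> j" "j < length vs"
  shows "dist (vs ! i) (vs ! j) \<le> (\<Sum>k\<in>{i..<j}. dist (vs ! k) (vs ! ((k + 1) mod length vs)))"
  using assms
proof (induction j)
  case 0
  then show ?case by simp
next
  case (Suc j)
  show ?case
  proof (cases "i = Suc j")
    case True
    then show ?thesis by simp
  next
    case False
    then have ij: "i \<le> j" using Suc.prems by simp
    have IH: "dist (vs ! i) (vs ! j) \<le> (\<Sum>k\<in>{i..<j}. dist (vs ! k) (vs ! ((k + 1) mod length vs)))"
      using Suc.IH ij Suc.prems by simp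
    have md: "(j + 1) mod length vs = Suc j" using Suc.prems by simp
    have "dist (vs ! i) (vs ! Suc j) \<le> dist (vs ! i) (vs ! j) + dist (vs ! j) (vs ! Suc j)"
      by (rule dist_triangle)
    also have "\<dots> \<le> (\<Sum>k\<in>{i..<j}. dist (vs ! k) (vs ! ((k + 1) mod length vs))) + dist (vs ! j) (vs ! ((j + 1) mod length vs))"
      using IH md by simp
    also have "\<dots> = (\<Sum>k\<in>{i..<Suc j}. dist (vs ! k) (vs ! ((k + 1) mod length vs)))"
      using ij by simp
    finally show ?thesis .
  qed
qed

lemma dist_le_cyclic:
  assumes "i < length vs" "j < length vs"
  shows "dist (vs ! i) (vs ! j) \<le> cyclic_length vs"
proof -
  have *: "dist (vs ! i) (vs ! j) \<le> cyclic_length vs" if "i \<le> j" "j < length vs" for i j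
  proof -
    have "dist (vs ! i) (vs ! j) \<le> (\<Sum>k\<in>{i..<j}. dist (vs ! k) (vs ! ((k + 1) mod length vs)))"
      using dist_le_path that by blast
    also have "\<dots> \<le> (\<Sum>k<length vs. dist (vs ! k) (vs ! ((k + 1) mod length vs)))"
      by (rule sum_mono2) (use that in auto)
    finally show ?thesis unfolding cyclic_length_def .
  qed
  show ?thesis
  proof (cases "i \<le> j")
    case True then show ?thesis using * assms by blast
  next
    case False then show ?thesis using *[of j i] assms by (simp add: dist_commute)
  qed
qed

lemma diameter_le_perimeter:
  assumes fin: "finite C" and ne: "C \<noteq> {}"
  shows "diameter C \<le> hull_perimeter C"
proof -
  obtain vs where vs: "ccw_hull_list C vs" "hull_perimeter C = cyclic_length vs"
    using hull_perimeter_ex[OF assms] by blast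
  define E where "E = {x. x extreme_point_of (convex hull C)}"
  define L where "L = cyclic_length vs"
  have setv: "set vs = E" using vs(1) unfolding ccw_hull_list_def E_def by simp
  have hullE: "convex hull C = convex hull E"
  proof -
    have "compact (convex hull C)" using fin by (simp add: compact_convex_hull finite_imp_compact)
    then have "convex hull C = convex hull E"
      unfolding E_def by (rule Krein_Milman_Minkowski) (simp add: convex_convex_hull)
    then show ?thesis by simp
  qed
  have EE: "dist e f \<le> L" if "e \<in> E" "f \<in> E" for e f
    using that setv dist_le_cyclic unfolding L_def by (metis in_set_conv_nth)
  have E1: "\<forall>y\<in>convex hull E. dist e y \<le> L" if "e \<in> E" for e
    by (rule convex_on_convex_hull_bound) (use EE that in \<open>auto intro!: convex_on_dist simp: convex_convex_hull\<close>)
  have E2: "\<forall>x\<in>convex hull E. dist y x \<le> L" if "y \<in> convex hull E" for y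
  proof (rule convex_on_convex_hull_bound)
    show "convex_on (convex hull E) (dist y)" by (rule convex_on_dist) (simp add: convex_convex_hull)
    show "\<forall>x\<in>E. dist y x \<le> L" using E1 that by (metis dist_commute)
  qed
  have "\<And>x y. x \<in> C \<Longrightarrow> y \<in> C \<Longrightarrow> norm (x - y) \<le> L"
  proof -
    fix x y assume "x \<in> C" "y \<in> C"
    then have "x \<in> convex hull E" "y \<in> convex hull E" using hullE hull_subset[of C convex] by auto
    then show "norm (x - y) \<le> L" using E2 by (simp add: dist_norm norm_minus_commute)
  qed
  then have "diameter C \<le> L" using ne by (intro diameter_le) auto
  then show ?thesis using vs L_def by simp
qed

lemma hull_perimeter_nonneg:
  assumes "finite C" "C \<noteq> {}"
  shows "hull_perimeter C \<ge> 0"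
  using hull_perimeter_ex[OF assms] cyclic_length_nonneg by metis



definition ch :: "'a set set \<Rightarrow> 'a set \<Rightarrow> 'a set set" where
  "ch H P = {C \<in> H. C \<subset> P \<and> (\<forall>D\<in>H. \<not> (C \<subset> D \<and> D \<subset> P))}"

lemma lamD: "laminar H \<Longrightarrow> A \<in> H \<Longrightarrow> B \<in> H \<Longrightarrow> A \<inter> B = {} \<or> A \<subseteq> B \<or> B \<subseteq> A"
  unfolding laminar_def by blast

lemma chD: "C \<in> ch H P \<Longrightarrow> C \<in> H \<and> C \<subset> P"
  unfolding ch_def by blast

lemma ch_min: "C \<in> ch H P \<Longrightarrow> D \<in> H \<Longrightarrow> C \<subset> D \<Longrightarrow> D \<subset> P \<Longrightarrow> False"
  unfolding ch_def by blast

lemma ch_disj: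
  assumes lam: "laminar H" and c1: "C1 \<in> ch H P" and c2: "C2 \<in> ch H P" and ne: "C1 \<noteq> C2"
  shows "C1 \<inter> C2 = {}"
proof -
  have "C1 \<in> H" "C2 \<in> H" using chD[OF c1] chD[OF c2] by auto
  then have "C1 \<inter> C2 = {} \<or> C1 \<subseteq> C2 \<or> C2 \<subseteq> C1" using lamD[OF lam] by blast
  moreover have "\<not> C1 \<subset> C2" using ch_min[OF c1, of C2] chD[OF c2] by blast
  moreover have "\<not> C2 \<subset> C1" using ch_min[OF c2, of C1] chD[OF c1] by blast
  ultimately show ?thesis using ne by blast
qed

lemma union_laminar:
  assumes lam: "laminar H" and c1: "C1 \<in> ch H P" and c2: "C2 \<in> ch H P" and PH: "P \<in> H"
    and X: "X \<in> H"
  shows "(C1 \<union> C2) \<inter> X = {} \<or> C1 \<union> C2 \<subseteq> X \<or> X \<subseteq> C1 \<union> C2"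
proof -
  have c1H: "C1 \<in> H" "C1 \<subset> P" and c2H: "C2 \<in> H" "C2 \<subset> P" using chD[OF c1] chD[OF c2] by auto
  have key: "X \<subseteq> C \<or> X = C \<or> P \<subseteq> X" if "C \<in> ch H P" "C \<inter> X \<noteq> {}" for C
  proof -
    have CH: "C \<in> H" "C \<subset> P" using chD[OF that(1)] by auto
    have "X \<subseteq> C \<or> C \<subseteq> X" using lamD[OF lam CH(1) X] that(2) by blast
    moreover have "C \<subseteq> X \<Longrightarrow> X \<subseteq> P \<or> P \<subseteq> X"
      using lamD[OF lam PH X] CH that(2) by blast
    moreover have "C \<subset> X \<Longrightarrow> X \<subset> P \<Longrightarrow> False" using ch_min[OF that(1) X] by blast
    ultimately show ?thesis by blast
  qed
  show ?thesis
  proof (cases "(C1 \<union> C2) \<inter> X = {}")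
    case True then show ?thesis by simp
  next
    case False
    then have "C1 \<inter> X \<noteq> {} \<or> C2 \<inter> X \<noteq> {}" by blast
    then show ?thesis
    proof
      assume "C1 \<inter> X \<noteq> {}"
      then have "X \<subseteq> C1 \<or> X = C1 \<or> P \<subseteq> X" using key c1 by blast
      then show ?thesis using c1H c2H by blast
    next
      assume "C2 \<inter> X \<noteq> {}"
      then have "X \<subseteq> C2 \<or> X = C2 \<or> P \<subseteq> X" using key c2 by blast
      then show ?thesis using c1H c2H by blast
    qed
  qed
qed

lemma card_ch_le2:
  assumes hc: "hierarchical_clustering S H" and PH: "P \<in> H"
  shows "card (ch H P) \<le> 2"
proof (rule ccontr)
  assume "\<not> ?thesis"
  then have c3: "card (ch H P) \<ge> 3" by simp
  then have fin: "finite (ch H P)" using card.infinite by fastforce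
  obtain C1 where C1: "C1 \<in> ch H P" using c3 by (metis card.empty ex_in_conv not_numeral_le_zero)
  have "card (ch H P - {C1}) \<ge> 2" using c3 C1 fin by simp
  then obtain C2 where C2: "C2 \<in> ch H P - {C1}" by (metis card.empty ex_in_conv not_numeral_le_zero)
  have "card (ch H P - {C1} - {C2}) \<ge> 1" using c3 C1 C2 fin by (simp add: card_Diff_singleton)
  then obtain C3 where C3: "C3 \<in> ch H P - {C1} - {C2}" by (metis card.empty ex_in_conv not_one_le_zero)
  have cf: "cluster_family S H" and mx: "\<And>H'. cluster_family S H' \<and> H \<subseteq> H' \<Longrightarrow> H' = H"
    using hc unfolding hierarchical_clustering_def by auto
  have lam: "laminar H" using cf unfolding cluster_family_def by blast
  have inH: "C1 \<in> H" "C2 \<in> H" "C3 \<in> H" "C1 \<subset> P" "C2 \<subset> P" "C3 \<subset> P"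
    using chD[of C1 H P] chD[of C2 H P] chD[of C3 H P] C1 C2 C3 by auto
  have nonempty: "C1 \<noteq> {}" "C2 \<noteq> {}" "C3 \<noteq> {}" "P \<subseteq> S"
    using cf inH PH unfolding cluster_family_def by auto
  have d12: "C1 \<inter> C2 = {}" using ch_disj[OF lam C1, of C2] C2 by auto
  have d13: "C1 \<inter> C3 = {}" using ch_disj[OF lam C1, of C3] C3 by auto
  have d23: "C2 \<inter> C3 = {}" using ch_disj[OF lam, of C2 P C3] C2 C3 by auto
  define U where "U = C1 \<union> C2"
  have lamU: "\<And>X. X \<in> H \<Longrightarrow> U \<inter> X = {} \<or> U \<subseteq> X \<or> X \<subseteq> U"
    unfolding U_def using union_laminar[OF lam C1 _ PH] C2 by blast
  have "cluster_family S (insert U H)"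
    unfolding cluster_family_def
  proof (intro conjI)
    show "\<forall>C\<in>insert U H. C \<noteq> {} \<and> C \<subseteq> S"
      using cf nonempty inH unfolding cluster_family_def U_def by auto
    show "S \<in> insert U H" "\<forall>x\<in>S. {x} \<in> insert U H" using cf unfolding cluster_family_def by auto
    show "laminar (insert U H)"
      unfolding laminar_def
    proof (intro ballI)
      fix A B assume "A \<in> insert U H" "B \<in> insert U H"
      then show "A \<inter> B = {} \<or> A \<subseteq> B \<or> B \<subseteq> A"
      proof (cases "A = U")
        case True
        then show ?thesis using \<open>B \<in> insert U H\<close> lamU by blast
      next
        case False
        then have AH: "A \<in> H" using \<open>A \<in> insert U H\<close> by blast
        show ?thesis
        proof (cases "B = U")
          case True then show ?thesis using lamU[OF AH] by blast
        next
          case False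
          then have "B \<in> H" using \<open>B \<in> insert U H\<close> by blast
          then show ?thesis using lamD[OF lam AH] by blast
        qed
      qed
    qed
  qed
  then have "insert U H = H" using mx by blast
  then have "U \<in> H" by blast
  moreover have "C1 \<subset> U" using d12 nonempty unfolding U_def by blast
  moreover have "U \<subset> P" using d13 d23 nonempty inH unfolding U_def by blast
  ultimately show False using ch_min[OF C1] by blast
qed



definition bx :: "pt \<Rightarrow> real \<Rightarrow> pt set" where
  "bx x r = cbox (x - (\<chi> i. r)) (x + (\<chi> i. r))"

lemma content_bx:
  assumes "r \<ge> 0"
  shows "measure lborel (bx x r) = 4 * r^2"
proof -
  have "x \<in> bx x r" unfolding bx_def mem_box_cart using assms by simp
  then have "bx x r \<noteq> {}" by blast
  then have "measure lborel (bx x r) = (\<Prod>i\<in>UNIV. (x + (\<chi> i. r))$i - (x - (\<chi> i. r))$i)"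
    unfolding bx_def by (rule content_cbox_cart)
  also have "\<dots> = 4 * r^2" unfolding UNIV_2 by (simp add: power2_eq_square)
  finally show ?thesis .
qed

lemma term_integral:
  assumes r: "r \<ge> 0"
  shows "(\<lambda>p. if p \<in> bx x r then 1 / r else 0) integrable_on cbox a b \<and>
         integral (cbox a b) (\<lambda>p. if p \<in> bx x r then 1 / r else 0) \<le> 4 * r"
proof -
  obtain u v where uv: "bx x r \<inter> cbox a b = cbox u v"
    unfolding bx_def Int_interval by blast
  have int: "(\<lambda>p. if p \<in> bx x r then 1 / r else 0) integrable_on cbox a b"
    using integrable_restrict_Int[of "bx x r" "\<lambda>p. 1 / r" "cbox a b"] uv integrable_const[of "1/r" u v] by simp
  have "integral (cbox a b) (\<lambda>p. if p \<in> bx x r then 1 / r else 0) = integral (cbox u v) (\<lambda>p. 1 / r)"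
    using integral_restrict_Int[of "cbox a b" "bx x r" "\<lambda>p. 1 / r"] uv by simp
  also have "\<dots> = measure lborel (cbox u v) * (1 / r)" by simp
  also have "\<dots> \<le> measure lborel (bx x r) * (1 / r)"
  proof (rule mult_right_mono)
    show "measure lborel (cbox u v) \<le> measure lborel (bx x r)"
      unfolding bx_def by (rule content_subset) (use uv bx_def in blast)
  qed (use r in simp)
  also have "\<dots> \<le> 4 * r"
    using content_bx[OF r] r by (cases "r = 0") (simp_all add: power2_eq_square)
  finally show ?thesis using int by simp
qed

lemma mem_bx:
  assumes "dist p x \<le> r"
  shows "p \<in> bx x r"
proof -
  have "\<bar>(p - x)$i\<bar> \<le> r" for i using component_le_norm_cart[of "p - x" i] assms by (simp add: dist_norm)
  then have "x$i - r \<le> p$i \<and> p$i \<le> x$i + r" for i by (simp add: abs_le_iff) (metis add.commute diff_le_eq le_diff_eq)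
  then show ?thesis unfolding bx_def mem_box_cart by simp
qed



lemma two_points:
  assumes "finite S" "card S \<ge> 2"
  shows "\<exists>q q'. q \<in> S \<and> q' \<in> S \<and> q \<noteq> q'"
proof -
  obtain q where q: "q \<in> S" using assms by (metis card.empty ex_in_conv not_numeral_le_zero)
  have "card (S - {q}) \<ge> 1" using assms q by simp
  then obtain q' where "q' \<in> S - {q}" by (metis card.empty ex_in_conv not_one_le_zero)
  then show ?thesis using q by blast
qed

lemma lfs_set_finite:
  assumes "finite S"
  shows "finite {max (dist p q) (dist p q') | q q'. q \<in> S \<and> q' \<in> S \<and> q \<noteq> q'}"
proof -
  have "{max (dist p q) (dist p q') | q q'. q \<in> S \<and> q' \<in> S \<and> q \<noteq> q'} \<subseteq> (\<lambda>z. max (dist p (fst z)) (dist p (snd z))) ` (S \<times> S)"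
  proof
    fix x assume "x \<in> {max (dist p q) (dist p q') | q q'. q \<in> S \<and> q' \<in> S \<and> q \<noteq> q'}"
    then obtain q q' where "q \<in> S" "q' \<in> S" "x = max (dist p q) (dist p q')" by blast
    then show "x \<in> (\<lambda>z. max (dist p (fst z)) (dist p (snd z))) ` (S \<times> S)"
      by (intro rev_image_eqI[of "(q, q')"]) auto
  qed
  moreover have "finite ((\<lambda>z. max (dist p (fst z)) (dist p (snd z))) ` (S \<times> S))" using assms by simp
  ultimately show ?thesis by (rule finite_subset)
qed

lemma lfs_attained:
  assumes "finite S" "card S \<ge> 2"
  shows "\<exists>q q'. q \<in> S \<and> q' \<in> S \<and> q \<noteq> q' \<and> lfs S p = max (dist p q) (dist p q')"
proof -
  have ne: "{max (dist p q) (dist p q') | q q'. q \<in> S \<and> q' \<in> S \<and> q \<noteq> q'} \<noteq> {}"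
    using two_points[OF assms] by blast
  have "lfs S p \<in> {max (dist p q) (dist p q') | q q'. q \<in> S \<and> q' \<in> S \<and> q \<noteq> q'}"
    unfolding lfs_def by (rule Min_in[OF lfs_set_finite[OF assms(1)] ne])
  then show ?thesis by blast
qed

lemma lfs_le:
  assumes "finite S" "q \<in> S" "q' \<in> S" "q \<noteq> q'"
  shows "lfs S p \<le> max (dist p q) (dist p q')"
  unfolding lfs_def by (rule Min_le[OF lfs_set_finite[OF assms(1)]]) (use assms in blast)

lemma lfs_near:
  assumes "finite S" "card S \<ge> 2"
  shows "\<exists>a\<in>S. dist p a \<le> lfs S p"
  using lfs_attained[OF assms, of p] by (metis max.cobounded1)

lemma lfs_lower:
  assumes fin: "finite S" and c2: "card S \<ge> 2"
  shows "\<exists>r0>0. \<forall>p. r0 \<le> lfs S p"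
proof -
  define D where "D = {dist q q' | q q'. q \<in> S \<and> q' \<in> S \<and> q \<noteq> q'}"
  have finD: "finite D"
  proof -
    have "D \<subseteq> (\<lambda>z. dist (fst z) (snd z)) ` (S \<times> S)"
    proof
      fix x assume "x \<in> D"
      then obtain q q' where "q \<in> S" "q' \<in> S" "x = dist q q'" unfolding D_def by blast
      then show "x \<in> (\<lambda>z. dist (fst z) (snd z)) ` (S \<times> S)"
        by (intro rev_image_eqI[of "(q, q')"]) auto
    qed
    moreover have "finite ((\<lambda>z. dist (fst z) (snd z)) ` (S \<times> S))" using fin by simp
    ultimately show ?thesis by (rule finite_subset)
  qed
  have neD: "D \<noteq> {}" using two_points[OF fin c2] unfolding D_def by blast
  have posD: "\<forall>d\<in>D. d > 0" unfolding D_def by auto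
  define r0 where "r0 = Min D / 2"
  have "Min D \<in> D" using finD neD by simp
  then have r0pos: "r0 > 0" using posD r0_def by auto
  have "r0 \<le> lfs S p" for p
  proof -
    obtain q q' where qq: "q \<in> S" "q' \<in> S" "q \<noteq> q'" "lfs S p = max (dist p q) (dist p q')"
      using lfs_attained[OF fin c2, of p] by blast
    have "Min D \<le> dist q q'" using finD qq unfolding D_def by (intro Min_le) auto
    moreover have "dist q q' \<le> dist p q + dist p q'" by (metis dist_commute dist_triangle)
    ultimately show ?thesis using qq r0_def by linarith
  qed
  then show ?thesis using r0pos by blast
qed

lemma square_bound:
  assumes fin: "finite S" and c2: "card S \<ge> 2" and sq: "min_bounding_square S Q" and pQ: "p \<in> Q"
  shows "lfs S p \<le> 2 * diameter S"
proof -
  obtain a s where as: "s \<ge> 0" "Q = cbox a (a + (\<chi> i. s))" "S \<subseteq> Q"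
    "\<forall>a' s'. s' \<ge> 0 \<and> S \<subseteq> cbox a' (a' + (\<chi> i. s')) \<longrightarrow> s \<le> s'"
    using sq unfolding min_bounding_square_def by blast
  have neS: "S \<noteq> {}" using c2 by auto
  have bS: "bounded S" using fin by (simp add: finite_imp_bounded)
  define a' where "a' = (\<chi> i. Min ((\<lambda>q. q$i) ` S))"
  have "S \<subseteq> cbox a' (a' + (\<chi> i. diameter S))"
  proof
    fix q assume q: "q \<in> S"
    have "a'$i \<le> q$i \<and> q$i \<le> a'$i + diameter S" for i
    proof -
      have "Min ((\<lambda>q. q$i) ` S) \<in> (\<lambda>q. q$i) ` S" using fin neS by simp
      then obtain q0 where q0: "q0 \<in> S" "a'$i = q0$i" unfolding a'_def by auto
      have "a'$i \<le> q$i" unfolding a'_def using fin q by simp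
      moreover have "q$i - q0$i \<le> diameter S"
      proof -
        have "q$i - q0$i \<le> \<bar>(q - q0)$i\<bar>" by simp
        also have "\<dots> \<le> norm (q - q0)" by (rule component_le_norm_cart)
        also have "\<dots> \<le> diameter S" using diameter_bounded_bound[OF bS q q0(1)] by (simp add: dist_norm)
        finally show ?thesis .
      qed
      ultimately show ?thesis using q0 by simp
    qed
    then show "q \<in> cbox a' (a' + (\<chi> i. diameter S))" unfolding mem_box_cart by simp
  qed
  then have sd: "s \<le> diameter S" using as(4) diameter_ge_0[OF bS] by blast
  obtain q q' where qq: "q \<in> S" "q' \<in> S" "q \<noteq> q'" using two_points[OF fin c2] by blast
  have dQ: "dist p y \<le> 2 * s" if "y \<in> Q" for y
  proof -
    have ab: "\<bar>p$i - y$i\<bar> \<le> s" for i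
    proof -
      have "a$i \<le> p$i" "p$i \<le> a$i + s" "a$i \<le> y$i" "y$i \<le> a$i + s"
      proof -
        have "\<forall>i. a$i \<le> p$i \<and> p$i \<le> (a + (\<chi> i. s))$i" "\<forall>i. a$i \<le> y$i \<and> y$i \<le> (a + (\<chi> i. s))$i"
          using pQ that as(2) mem_box_cart(2) by blast+
        then show "a$i \<le> p$i" "p$i \<le> a$i + s" "a$i \<le> y$i" "y$i \<le> a$i + s" by auto
      qed
      then show ?thesis by linarith
    qed
    have "(\<Sum>i\<in>UNIV. \<bar>(p - y)$i\<bar>) = \<bar>p$1 - y$1\<bar> + \<bar>p$2 - y$2\<bar>" unfolding UNIV_2 by simp
    then have "(\<Sum>i\<in>UNIV. \<bar>(p - y)$i\<bar>) \<le> 2 * s" using ab[of 1] ab[of 2] by linarith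
    then show ?thesis using norm_le_l1_cart[of "p - y"] by (simp add: dist_norm)
  qed
  have "lfs S p \<le> max (dist p q) (dist p q')" by (rule lfs_le[OF fin qq])
  also have "\<dots> \<le> 2 * s" using dQ qq as(3) by auto
  finally show ?thesis using sd by linarith
qed



definition xc :: "pt set \<Rightarrow> pt" where "xc C = (SOME x. x \<in> C)"

definition tf :: "pt set \<Rightarrow> pt set \<Rightarrow> nat \<Rightarrow> pt \<Rightarrow> real" where
  "tf P C k p = (if p \<in> bx (xc C) (3 * diameter P / 2^k) then 1 / (3 * diameter P / 2^k) else 0)"

definition FF :: "pt set set \<Rightarrow> nat \<Rightarrow> pt \<Rightarrow> real" where
  "FF H N p = (\<Sum>P\<in>H. \<Sum>C\<in>ch H P. \<Sum>k\<le>N. tf P C k p)"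

lemma tf_nonneg: "bounded P \<Longrightarrow> tf P C k p \<ge> 0"
  unfolding tf_def using diameter_ge_0[of P] by auto

lemma cf_facts:
  assumes "hierarchical_clustering S H"
  shows "\<forall>C\<in>H. C \<noteq> {} \<and> C \<subseteq> S" "S \<in> H" "\<forall>x\<in>S. {x} \<in> H" "laminar H"
  using assms unfolding hierarchical_clustering_def cluster_family_def by auto

lemma finite_H:
  assumes "hierarchical_clustering S H" "finite S"
  shows "finite H"
proof -
  have "H \<subseteq> Pow S" using cf_facts(1)[OF assms(1)] by auto
  then show ?thesis using assms(2) finite_subset by (metis finite_Pow_iff)
qed

lemma pointwise:
  assumes hc: "hierarchical_clustering S H" and fin: "finite S" and c2: "card S \<ge> 2"
    and r0: "r0 > 0" "r0 \<le> lfs S p" and N: "3 * diameter S / r0 < 2^N"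
    and pb: "lfs S p \<le> 2 * diameter S"
  shows "1 / lfs S p \<le> 3 * FF H N p"
proof -
  define m where "m = lfs S p"
  have m0: "m > 0" "r0 \<le> m" using r0 m_def by auto
  have cf: "\<forall>C\<in>H. C \<noteq> {} \<and> C \<subseteq> S" "S \<in> H" "\<forall>x\<in>S. {x} \<in> H" using cf_facts[OF hc] by auto
  have finH: "finite H" by (rule finite_H[OF hc fin])
  have finC: "\<And>C. C \<in> H \<Longrightarrow> finite C" using cf fin finite_subset by blast
  have bC: "\<And>C. C \<in> H \<Longrightarrow> bounded C" using finC finite_imp_bounded by blast
  obtain a where a: "a \<in> S" "dist p a \<le> m" using lfs_near[OF fin c2, of p] m_def by blast
  define T where "T = {C \<in> H. a \<in> C \<and> diameter C < m/2}"
  have aT: "{a} \<in> T" unfolding T_def using cf a m0 by auto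
  have finT: "finite T" unfolding T_def using finH by simp
  obtain P' where P': "P' \<in> T" "\<forall>B\<in>T. P' \<subseteq> B \<longrightarrow> P' = B"
    using finite_has_maximal[OF finT] aT by blast
  have P'H: "P' \<in> H" "a \<in> P'" "diameter P' < m/2" using P' T_def by auto
  have P'S: "P' \<subset> S"
  proof -
    have "P' \<subseteq> S" using cf P'H by blast
    moreover have "P' \<noteq> S" using P'H pb m_def by auto
    ultimately show ?thesis by blast
  qed
  define U where "U = {D \<in> H. P' \<subset> D}"
  have SU: "S \<in> U" unfolding U_def using cf P'S by blast
  have finU: "finite U" unfolding U_def using finH by simp
  obtain P where P: "P \<in> U" "\<forall>B\<in>U. B \<subseteq> P \<longrightarrow> P = B"
    using finite_has_minimal[OF finU] SU by blast
  have PH: "P \<in> H" "P' \<subset> P" using P U_def by auto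
  have chP: "P' \<in> ch H P"
    unfolding ch_def using PH P'H P U_def by auto
  have dP: "diameter P \<ge> m/2"
  proof (rule ccontr)
    assume "\<not> ?thesis"
    then have "P \<in> T" unfolding T_def using PH P'H by auto
    then show False using P' PH by blast
  qed
  have dPS: "diameter P \<le> diameter S"
    using diameter_subset[of P S] cf PH fin finite_imp_bounded by blast
  define x where "x = xc P'"
  have xP': "x \<in> P'" unfolding x_def xc_def using P'H by (metis someI_ex)
  have dax: "dist a x \<le> diameter P'" by (rule diameter_bounded_bound[OF bC[OF P'H(1)] P'H(2) xP'])
  have dpx: "dist p x \<le> 3 * m / 2"
    using dist_triangle[of p x a] a dax P'H by linarith
  define R where "R = 3 * diameter P"
  define K where "K = {k. k \<le> N \<and> 3 * m / 2 \<le> R / 2^k}"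
  have finK: "finite K" unfolding K_def by simp
  have K0: "0 \<in> K" unfolding K_def R_def using dP by simp
  define k where "k = Max K"
  have kK: "k \<in> K" unfolding k_def using finK K0 by (metis Max_in empty_iff)
  have kN: "k \<le> N" "3 * m / 2 \<le> R / 2^k" using kK K_def by auto
  have kup: "R / 2^k < 3 * m"
  proof (cases "k < N")
    case True
    have "Suc k \<notin> K" unfolding k_def using finK Max_ge by (metis Suc_n_not_le_n k_def)
    then have "R / 2^(Suc k) < 3 * m / 2" unfolding K_def using True by auto
    then show ?thesis by simp
  next
    case False
    then have kN': "k = N" using kN by simp
    have "R \<le> 3 * diameter S" unfolding R_def using dPS by simp
    then have "R / 2^N \<le> 3 * diameter S / 2^N" by (simp add: divide_right_mono)
    also have "\<dots> < r0" using N r0 by (simp add: field_simps)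
    finally show ?thesis using kN' m0 by simp
  qed
  define rk where "rk = R / 2^k"
  have rkpos: "rk > 0" using kN m0 rk_def by linarith
  have "dist p x \<le> rk" using dpx kN rk_def by linarith
  then have pin: "p \<in> bx (xc P') rk" using mem_bx[of p x rk] x_def by simp
  have tfv: "tf P P' k p = 1 / rk" unfolding tf_def using pin rk_def R_def by simp
  have "rk < 3 * m" using kup rk_def by simp
  then have "1 / m \<le> 3 * (1 / rk)" using rkpos m0 by (simp add: field_simps)
  also have "\<dots> = 3 * tf P P' k p" using tfv by simp
  also have "tf P P' k p \<le> (\<Sum>k\<le>N. tf P P' k p)"
    by (rule member_le_sum) (use kN tf_nonneg bC PH in auto)
  also have "\<dots> \<le> (\<Sum>C\<in>ch H P. \<Sum>k\<le>N. tf P C k p)"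
    by (rule member_le_sum[where f="\<lambda>C. \<Sum>k\<le>N. tf P C k p"]) (use chP tf_nonneg finH bC PH in \<open>auto intro: sum_nonneg finite_subset[OF _ finH] simp: ch_def\<close>)
  also have "\<dots> \<le> FF H N p"
    unfolding FF_def by (rule member_le_sum[where f="\<lambda>P. \<Sum>C\<in>ch H P. \<Sum>k\<le>N. tf P C k p"]) (use PH tf_nonneg finH bC in \<open>auto intro!: sum_nonneg\<close>)
  finally show ?thesis unfolding m_def by simp
qed



lemma geom_half: "(\<Sum>k\<le>N. (1/2::real)^k) = 2 - (1/2)^N"
  by (induction N) (auto simp: power_Suc)

lemma geom_sum:
  assumes "R \<ge> (0::real)"
  shows "(\<Sum>k\<le>N. 4 * (R / 2^k)) \<le> 8 * R"
proof -
  have "(\<Sum>k\<le>N. 4 * (R / 2^k)) = 4 * R * (\<Sum>k\<le>N. (1/2::real)^k)"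
  proof -
    have "\<And>k. 4 * (R / 2^k) = 4 * R * (1/2::real)^k" by (simp add: power_one_over)
    then have "(\<Sum>k\<le>N. 4 * (R / 2^k)) = (\<Sum>k\<le>N. 4 * R * (1/2::real)^k)" by simp
    also have "\<dots> = 4 * R * (\<Sum>k\<le>N. (1/2::real)^k)" by (rule sum_distrib_left[symmetric])
    finally show ?thesis .
  qed
  also have "\<dots> = 4 * R * (2 - (1/2)^N)" by (simp add: geom_half)
  also have "\<dots> \<le> 4 * R * 2" using assms by (intro mult_left_mono) auto
  finally show ?thesis by simp
qed

lemma tf_int:
  assumes "bounded P"
  shows "tf P C k integrable_on cbox a b \<and> integral (cbox a b) (tf P C k) \<le> 4 * (3 * diameter P / 2^k)"
proof -
  have r: "3 * diameter P / 2^k \<ge> 0" using diameter_ge_0[OF assms] by simp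
  have eq: "tf P C k = (\<lambda>p. if p \<in> bx (xc C) (3 * diameter P / 2^k) then 1 / (3 * diameter P / 2^k) else 0)"
    unfolding tf_def by (rule ext) simp
  show ?thesis unfolding eq by (rule term_integral[OF r])
qed

lemma FF_int:
  assumes hc: "hierarchical_clustering S H" and fin: "finite S"
  shows "FF H N integrable_on cbox a b \<and> integral (cbox a b) (FF H N) \<le> 48 * (\<Sum>P\<in>H. diameter P)"
proof -
  have cf: "\<forall>C\<in>H. C \<noteq> {} \<and> C \<subseteq> S" using cf_facts[OF hc] by auto
  have finH: "finite H" by (rule finite_H[OF hc fin])
  have bC: "\<And>C. C \<in> H \<Longrightarrow> bounded C" using cf fin finite_subset finite_imp_bounded by blast
  have finch: "\<And>P. finite (ch H P)" using finH unfolding ch_def by simp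
  define g2 where "g2 = (\<lambda>P C p. \<Sum>k\<le>N. tf P C k p)"
  define g1 where "g1 = (\<lambda>P p. \<Sum>C\<in>ch H P. g2 P C p)"
  have FFeq: "FF H N = (\<lambda>p. \<Sum>P\<in>H. g1 P p)" unfolding FF_def g1_def g2_def by (rule ext) simp
  have i2: "g2 P C integrable_on cbox a b \<and> integral (cbox a b) (g2 P C) \<le> 24 * diameter P" if "P \<in> H" for P C
  proof -
    have int: "\<And>k. tf P C k integrable_on cbox a b" using tf_int bC that by blast
    have "integral (cbox a b) (g2 P C) = (\<Sum>k\<le>N. integral (cbox a b) (tf P C k))"
      unfolding g2_def by (rule integral_sum) (use int in auto)
    also have "\<dots> \<le> (\<Sum>k\<le>N. 4 * (3 * diameter P / 2^k))"
      by (rule sum_mono) (use tf_int bC that in blast)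
    also have "\<dots> \<le> 8 * (3 * diameter P)"
      by (rule geom_sum) (use diameter_ge_0 bC that in auto)
    finally have "integral (cbox a b) (g2 P C) \<le> 24 * diameter P" by simp
    moreover have "g2 P C integrable_on cbox a b" unfolding g2_def by (rule integrable_sum) (use int in auto)
    ultimately show ?thesis by blast
  qed
  have i1: "g1 P integrable_on cbox a b \<and> integral (cbox a b) (g1 P) \<le> 48 * diameter P" if P: "P \<in> H" for P
  proof -
    have "integral (cbox a b) (g1 P) = (\<Sum>C\<in>ch H P. integral (cbox a b) (g2 P C))"
      unfolding g1_def by (rule integral_sum) (use i2 P finch in auto)
    also have "\<dots> \<le> (\<Sum>C\<in>ch H P. 24 * diameter P)"
      by (rule sum_mono) (use i2 P in blast)
    also have "\<dots> = card (ch H P) * (24 * diameter P)" by simp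
    also have "\<dots> \<le> 2 * (24 * diameter P)"
      by (rule mult_right_mono) (use card_ch_le2[OF hc P] diameter_ge_0 bC P in auto)
    finally have "integral (cbox a b) (g1 P) \<le> 48 * diameter P" by simp
    moreover have "g1 P integrable_on cbox a b" unfolding g1_def by (rule integrable_sum) (use i2 P finch in auto)
    ultimately show ?thesis by blast
  qed
  have "integral (cbox a b) (FF H N) = (\<Sum>P\<in>H. integral (cbox a b) (g1 P))"
    unfolding FFeq by (rule integral_sum) (use i1 finH in auto)
  also have "\<dots> \<le> (\<Sum>P\<in>H. 48 * diameter P)"
    by (rule sum_mono) (use i1 in blast)
  also have "\<dots> = 48 * (\<Sum>P\<in>H. diameter P)" by (simp add: sum_distrib_left)
  finally have "integral (cbox a b) (FF H N) \<le> 48 * (\<Sum>P\<in>H. diameter P)" .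
  moreover have "FF H N integrable_on cbox a b" unfolding FFeq by (rule integrable_sum) (use i1 finH in auto)
  ultimately show ?thesis by blast
qed

theorem lemma10:
  "\<exists>c::real. c > 0 \<and>
     (\<forall>(S::pt set) Q H. finite S \<and> card S \<ge> 2 \<and> min_bounding_square S Q \<and>
        hierarchical_clustering S H \<longrightarrow>
        c * integral Q (\<lambda>p. 1 / lfs S p) \<le> (\<Sum>C\<in>H. hull_perimeter C))"
proof (rule exI[of _ "1/144"], intro conjI allI impI)
  show "(0::real) < 1/144" by simp
next
  fix S :: "pt set" and Q H
  assume A: "finite S \<and> card S \<ge> 2 \<and> min_bounding_square S Q \<and> hierarchical_clustering S H"
  then have fin: "finite S" and c2: "card S \<ge> 2" and sq: "min_bounding_square S Q"
    and hc: "hierarchical_clustering S H" by auto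
  have cf: "\<forall>C\<in>H. C \<noteq> {} \<and> C \<subseteq> S" using cf_facts[OF hc] by auto
  have finH: "finite H" by (rule finite_H[OF hc fin])
  have finC: "\<And>C. C \<in> H \<Longrightarrow> finite C" using cf fin finite_subset by blast
  have bC: "\<And>C. C \<in> H \<Longrightarrow> bounded C" using finC finite_imp_bounded by blast
  have sum_le: "(\<Sum>C\<in>H. diameter C) \<le> (\<Sum>C\<in>H. hull_perimeter C)"
    by (rule sum_mono) (use diameter_le_perimeter finC cf in blast)
  have sum_nn: "(\<Sum>C\<in>H. diameter C) \<ge> 0"
    by (rule sum_nonneg) (use diameter_ge_0 bC in blast)
  obtain r0 where r0: "r0 > 0" "\<forall>p. r0 \<le> lfs S p" using lfs_lower[OF fin c2] by blast
  obtain N :: nat where N: "3 * diameter S / r0 < 2^N" using real_arch_pow[of 2] by auto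
  obtain a s where Qd: "Q = cbox a (a + (\<chi> i. s))"
    using sq unfolding min_bounding_square_def by blast
  show "1/144 * integral Q (\<lambda>p. 1 / lfs S p) \<le> (\<Sum>C\<in>H. hull_perimeter C)"
  proof (cases "(\<lambda>p. 1 / lfs S p) integrable_on Q")
    case True
    have FI: "FF H N integrable_on Q \<and> integral Q (FF H N) \<le> 48 * (\<Sum>P\<in>H. diameter P)"
      unfolding Qd by (rule FF_int[OF hc fin])
    have "integral Q (\<lambda>p. 1 / lfs S p) \<le> integral Q (\<lambda>p. 3 * FF H N p)"
    proof (rule integral_le)
      show "(\<lambda>p. 1 / lfs S p) integrable_on Q" by fact
      show "(\<lambda>p. 3 * FF H N p) integrable_on Q" using FI integrable_on_mult_right by blast
      fix p assume "p \<in> Q"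
      then have pb: "lfs S p \<le> 2 * diameter S" by (rule square_bound[OF fin c2 sq])
      show "1 / lfs S p \<le> 3 * FF H N p"
        by (rule pointwise[OF hc fin c2 r0(1) _ N pb]) (use r0 in blast)
    qed
    also have "\<dots> = 3 * integral Q (FF H N)" by simp
    also have "\<dots> \<le> 3 * (48 * (\<Sum>P\<in>H. diameter P))" using FI by simp
    finally have "integral Q (\<lambda>p. 1 / lfs S p) \<le> 144 * (\<Sum>P\<in>H. diameter P)" by simp
    then show ?thesis using sum_le by simp
  next
    case False
    then have "integral Q (\<lambda>p. 1 / lfs S p) = 0" by (rule not_integrable_integral)
    then show ?thesis using sum_le sum_nn by simp
  qed
qed


end
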